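(* Let $A$ be an $l\times m$ matrix-valued function ($l\ge m$) with entries in $\mathcal N^\infty$ such that $\mathrm{Rank}A=m$. For $\Phi=[\varphi_1,\cdots,\varphi_r]\in L^2_{M_{m\times r}}$, let $\psi_i$ denote the $i$-th column of $\Psi:=A\Phi$. Then $\mathrm{ind}_{\mathcal N}\{\varphi_1,\cdots,\varphi_r\}=\mathrm{ind}_{\mathcal N}\{\psi_1,\cdots,\psi_r\}$.
   Context: The Nevanlinna class $\mathcal N$ is the set of functions on the unit circle $\mathbb T$ of the form $f/g$ with $f,g\in H^\infty$, $g\neq0$; $\mathcal N^p=\mathcal N\cap L^p$, $\mathcal N_{\mathbb C^k}$ denotes column vectors with entries in $\mathcal N$. $\mathrm{Rank}A:=\operatorname{ess\,sup}_{\zeta\in\mathbb T}\operatorname{rank}A(\zeta)$. Vectors $\varphi_1,\dots,\varphi_r\in L^2_{\mathbb C^k}$ are independent modulo Nevanlinna class if $a_i\in\mathcal N$ and $\sum a_i\varphi_i\in\mathcal N_{\mathbb C^k}$ imply all $a_i=0$; for a finite list of vectors, $\mathrm{ind}_{\mathcal N}$ is the largest size of an independent sub-list ($0$ if none). *)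

theory Defs
  imports "HOL-Analysis.Analysis"
begin

text \<open>Functions on the unit circle T are represented by functions t \<mapsto> f(e^{it}),
  t in [0, 2 pi], with normalised-free Lebesgue measure (null sets are what matter).\<close>

definition circ :: "real measure" where
  "circ = lebesgue_on {0..2*pi}"

definition Hinf :: "(real \<Rightarrow> complex) set" where
  "Hinf = {f. \<exists>F. F holomorphic_on ball 0 1 \<and> bounded (F ` ball 0 1) \<and>
      (AE t in circ. ((\<lambda>r. F (complex_of_real r * cis t)) \<longlongrightarrow> f t) (at_left 1))}"

text \<open>Nevanlinna class: quotients f/g with f, g in H-infinity and g nonzero (as an
  element of L-infinity, i.e. not a.e. zero); equality is a.e.\<close>
definition Nev :: "(real \<Rightarrow> complex) set" where
  "Nev = {h. \<exists>f g. f \<in> Hinf \<and> g \<in> Hinf \<and> \<not> (AE t in circ. g t = 0) \<and>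
                 (AE t in circ. h t = f t / g t)}"

definition Linf :: "(real \<Rightarrow> complex) set" where
  "Linf = {f. f \<in> borel_measurable circ \<and> (\<exists>C. AE t in circ. norm (f t) \<le> C)}"

definition L2 :: "(real \<Rightarrow> complex) set" where
  "L2 = {f. f \<in> borel_measurable circ \<and> integrable circ (\<lambda>t. (norm (f t))\<^sup>2)}"

definition Nev_inf :: "(real \<Rightarrow> complex) set" where
  "Nev_inf = Nev \<inter> Linf"

definition Nev_vec :: "(real \<Rightarrow> complex ^ 'k) set" where
  "Nev_vec = {v. \<forall>i. (\<lambda>t. v t $ i) \<in> Nev}"

definition indep_mod_Nev :: "('r \<Rightarrow> real \<Rightarrow> complex ^ 'k) \<Rightarrow> 'r set \<Rightarrow> bool" where
  "indep_mod_Nev \<phi> S \<longleftrightarrow>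
     (\<forall>a. (\<forall>i\<in>S. a i \<in> Nev) \<longrightarrow>
          (\<lambda>t. \<Sum>i\<in>S. a i t *s \<phi> i t) \<in> Nev_vec \<longrightarrow>
          (\<forall>i\<in>S. AE t in circ. a i t = 0))"

text \<open>ind_N of a finite family: largest size of an independent sub-family
  (the empty sub-family is vacuously independent, giving 0 if none).\<close>
definition ind_Nev :: "('r::finite \<Rightarrow> real \<Rightarrow> complex ^ 'k) \<Rightarrow> nat" where
  "ind_Nev \<phi> = Max (card ` {S. indep_mod_Nev \<phi> S})"

text \<open>Rank A = essential supremum of the pointwise rank.\<close>
definition Rank :: "(real \<Rightarrow> complex ^ 'm ^ 'l) \<Rightarrow> nat" where
  "Rank A = (LEAST n. AE t in circ. rank (A t) \<le> n)"

end

theory Submission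
  imports Defs "HOL-Complex_Analysis.Complex_Analysis" "HOL-Real_Asymp.Real_Asymp"
begin

lemma mean_value_circle:
  fixes h :: "complex \<Rightarrow> complex"
  assumes h: "h holomorphic_on ball 0 R" and r: "0 < r" "r < R"
  shows "((\<lambda>t. h (of_real r * cis t)) has_integral (2 * pi * h 0)) {0..2*pi}"
proof -
  have "h holomorphic_on cball 0 r" by (rule holomorphic_on_subset[OF h]) (use r in \<open>auto simp: subset_iff\<close>)
  from Cauchy_integral_circlepath_simple[OF this, of 0] r
  have "((\<lambda>u. h u / (u - 0)) has_contour_integral (2 * of_real pi * \<i> * h 0)) (circlepath 0 r)"
    by simp
  then have "((\<lambda>t. h (0 + r * cis t) / (0 + r * cis t - 0) * r * \<i> * cis t) has_integral (2 * of_real pi * \<i> * h 0)) {0..2*pi}"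
    unfolding circlepath_def by (subst (asm) has_contour_integral_part_circlepath_iff) auto
  moreover have "\<And>t. h (0 + r * cis t) / (0 + r * cis t - 0) * r * \<i> * cis t = \<i> * h (of_real r * cis t)"
    using r by (simp add: field_simps)
  ultimately have "((\<lambda>t. \<i> * h (of_real r * cis t)) has_integral (\<i> * (2 * pi * h 0))) {0..2*pi}"
    by (simp add: algebra_simps)
  from has_integral_mult_right[OF this, of "-\<i>"] show ?thesis by simp
qed

lemma ln_norm_mean_zero_free:
  fixes G :: "complex \<Rightarrow> complex"
  assumes G: "G holomorphic_on ball 0 R" and nz: "\<And>z. z \<in> ball 0 R \<Longrightarrow> G z \<noteq> 0"
    and r: "0 < r" "r < R"
  shows "((\<lambda>t. ln (norm (G (of_real r * cis t)))) has_integral (2 * pi * ln (norm (G 0)))) {0..2*pi}"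
proof -
  obtain g where g: "g holomorphic_on ball 0 R" "\<And>z. z \<in> ball 0 R \<Longrightarrow> G z = exp (g z)"
    using simply_connected_imp_holomorphic_log[OF G convex_imp_simply_connected[OF convex_ball]
        open_imp_locally_path_connected[OF open_ball] nz] by blast
  have mv: "((\<lambda>t. g (of_real r * cis t)) has_integral (2 * pi * g 0)) {0..2*pi}"
    by (rule mean_value_circle[OF g(1) r])
  have "((\<lambda>t. Re (g (of_real r * cis t))) has_integral Re (2 * pi * g 0)) {0..2*pi}"
    using has_integral_linear[OF mv bounded_linear_Re] by (simp add: o_def)
  moreover have "\<And>t. t \<in> {0..2*pi} \<Longrightarrow> Re (g (of_real r * cis t)) = ln (norm (G (of_real r * cis t)))"
  proof -
    fix t :: real
    have "of_real r * cis t \<in> ball 0 R" using r by (simp add: norm_mult)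
    then show "Re (g (of_real r * cis t)) = ln (norm (G (of_real r * cis t)))"
      using g(2) by (simp add: norm_exp_eq_Re)
  qed
  moreover have "Re (2 * pi * g 0) = 2 * pi * ln (norm (G 0))"
    using g(2)[of 0] r by (simp add: norm_exp_eq_Re)
  ultimately show ?thesis
    by (metis (no_types, lifting) has_integral_cong)
qed

lemma ln_norm_linear_mean:
  fixes a :: complex
  assumes a: "a \<noteq> 0" "norm a \<noteq> r" and r: "0 < r"
  shows "\<exists>v. v \<ge> 2 * pi * ln (norm a) \<and> ((\<lambda>t. ln (norm (of_real r * cis t - a))) has_integral v) {0..2*pi}"
proof (cases "norm a > r")
  case True
  have "((\<lambda>t. ln (norm ((\<lambda>z. z - a) (of_real r * cis t)))) has_integral (2 * pi * ln (norm ((\<lambda>z. z - a) 0)))) {0..2*pi}"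
    by (rule ln_norm_mean_zero_free[where R="norm a"]) (use True r in \<open>auto intro!: holomorphic_intros\<close>)
  then show ?thesis by auto
next
  case False
  then have lt: "norm a < r" using a by auto
  define G where "G = (\<lambda>z. of_real r - cnj a * z / of_real r)"
  have "((\<lambda>t. ln (norm (G (of_real r * cis t)))) has_integral (2 * pi * ln (norm (G 0)))) {0..2*pi}"
  proof (rule ln_norm_mean_zero_free[where R="r^2 / norm a"])
    show "G holomorphic_on ball 0 (r\<^sup>2 / cmod a)" unfolding G_def by (auto intro!: holomorphic_intros)
    show "G z \<noteq> 0" if "z \<in> ball 0 (r\<^sup>2 / cmod a)" for z
    proof
      assume "G z = 0"
      then have "cnj a * z = of_real r * of_real r" using r unfolding G_def by (simp add: field_simps)
      then have "norm a * norm z = r * r" by (metis complex_mod_cnj norm_mult norm_of_real abs_of_pos r)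
      moreover have "norm z < r^2 / norm a" using that by simp
      ultimately show False using a by (simp add: field_simps power2_eq_square)
    qed
    show "0 < r" by fact
    show "r < r\<^sup>2 / cmod a" using lt a r by (simp add: field_simps power2_eq_square)
  qed
  moreover have "\<And>t. norm (G (of_real r * cis t)) = norm (of_real r * cis t - a)"
  proof -
    fix t
    have e1: "G (of_real r * cis t) = of_real r - cnj a * cis t" unfolding G_def using r by simp
    have e2: "norm (of_real r - cnj a * cis t) = norm (cis (-t) * (of_real r - cnj a * cis t))" by (simp add: norm_mult)
    have cc: "cis t * cnj (cis t) = 1" by (simp add: cis_cnj cis_mult)
    have e3: "cis (-t) * (of_real r - cnj a * cis t) = cnj (of_real r * cis t - a)"
      using cc by (simp add: algebra_simps cis_mult flip: cis_cnj)
    show "norm (G (of_real r * cis t)) = norm (of_real r * cis t - a)"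
      using e1 e2 e3 by (simp only: complex_mod_cnj)
  qed
  moreover have "norm (G 0) = r" unfolding G_def using r by simp
  ultimately have I: "((\<lambda>t. ln (norm (of_real r * cis t - a))) has_integral (2 * pi * ln r)) {0..2*pi}"
    by simp
  have "ln (norm a) \<le> ln r" using lt a r by (subst ln_le_cancel_iff) auto
  then have "2 * pi * ln r \<ge> 2 * pi * ln (norm a)" by simp
  with I show ?thesis by blast
qed

lemma factor_one_zero:
  fixes F :: "complex \<Rightarrow> complex"
  assumes F: "F holomorphic_on S" and S: "open S" "connected S" and a: "a \<in> S"
    and nz: "\<exists>z\<in>S. F z \<noteq> 0"
  shows "\<exists>n g. g holomorphic_on S \<and> g a \<noteq> 0 \<and> (\<forall>z\<in>S. F z = (z - a) ^ n * g z)"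
proof (cases "F a = 0")
  case False
  then show ?thesis using F by (intro exI[of _ 0] exI[of _ F]) auto
next
  case True
  have nc: "\<not> F constant_on S" using nz True a unfolding constant_on_def by metis
  obtain g0 r n where "0 < n" "0 < r" "ball a r \<subseteq> S" and g0: "g0 holomorphic_on ball a r"
    and eq: "\<And>w. w \<in> ball a r \<Longrightarrow> F w = (w - a)^n * g0 w"
    and g0nz: "\<And>w. w \<in> ball a r \<Longrightarrow> g0 w \<noteq> 0"
    using holomorphic_factor_zero_nonconstant[OF F S a True nc] by metis
  define g where "g = (\<lambda>y. if y = a then g0 a else F y / (y - a) ^ n)"
  have "g holomorphic_on S" unfolding g_def
  proof (rule removable_singularity)
    show "(\<lambda>y. F y / (y - a) ^ n) holomorphic_on S - {a}"
      by (intro holomorphic_intros holomorphic_on_subset[OF F]) auto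
    show "open S" by fact
    have "isCont g0 a"
      by (rule continuous_on_interior[OF holomorphic_on_imp_continuous_on[OF g0]]) (use \<open>0 < r\<close> in simp)
    then have lim: "g0 \<midarrow>a\<rightarrow> g0 a" by (simp add: isCont_def)
    have ev: "\<forall>\<^sub>F y in at a. g0 y = F y / (y - a) ^ n"
      unfolding eventually_at by (rule exI[of _ r]) (use \<open>0 < r\<close> eq in \<open>auto simp: dist_commute\<close>)
    show "(\<lambda>y. F y / (y - a) ^ n) \<midarrow>a\<rightarrow> g0 a"
      using tendsto_cong[OF ev] lim by simp
  qed
  moreover have "g a \<noteq> 0" using g0nz[of a] \<open>0 < r\<close> unfolding g_def by simp
  moreover have "\<forall>z\<in>S. F z = (z - a) ^ n * g z"
    using True \<open>0 < n\<close> unfolding g_def by (auto simp: power_0_left)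
  ultimately show ?thesis by blast
qed

lemma factor_zeros_aux:
  fixes F :: "complex \<Rightarrow> complex"
  assumes S: "open S" "connected S" and K: "K \<subseteq> S"
  shows "card {z\<in>K. F z = 0} = n \<Longrightarrow> finite {z\<in>K. F z = 0} \<Longrightarrow> F holomorphic_on S \<Longrightarrow> (\<exists>z\<in>S. F z \<noteq> 0) \<Longrightarrow>
    \<exists>as G. G holomorphic_on S \<and> (\<forall>z\<in>K. G z \<noteq> 0) \<and> set as \<subseteq> {z\<in>K. F z = 0} \<and>
       (\<forall>z\<in>S. F z = prod_list (map (\<lambda>a. z - a) as) * G z)"
proof (induction n arbitrary: F)
  case 0
  then have "{z\<in>K. F z = 0} = {}" by simp
  then show ?case using 0 by (intro exI[of _ "[]"] exI[of _ F]) auto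
next
  case (Suc n)
  then obtain a where a: "a \<in> K" "F a = 0"
    by (metis (mono_tags, lifting) card.empty empty_Collect_eq nat.distinct(1))
  obtain m g where g: "g holomorphic_on S" "g a \<noteq> 0" "\<forall>z\<in>S. F z = (z - a) ^ m * g z"
    using factor_one_zero[OF Suc.prems(3) S, of a] a K Suc.prems(4) by blast
  have Z: "{z\<in>K. g z = 0} = {z\<in>K. F z = 0} - {a}"
  proof (intro set_eqI iffI)
    fix z assume z: "z \<in> {z\<in>K. g z = 0}"
    then have "z \<in> S" "g z = 0" "z \<noteq> a" using K g(2) by auto
    then show "z \<in> {z\<in>K. F z = 0} - {a}" using g(3) z by simp
  next
    fix z assume z: "z \<in> {z\<in>K. F z = 0} - {a}"
    then have "z \<in> S" "F z = 0" "z \<noteq> a" "z \<in> K" using K by auto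
    then show "z \<in> {z\<in>K. g z = 0}" using g(3) by simp
  qed
  have "card {z\<in>K. g z = 0} = n" using Z Suc.prems(1,2) a by simp
  moreover have "finite {z\<in>K. g z = 0}" using Z Suc.prems(2) by simp
  moreover have "\<exists>z\<in>S. g z \<noteq> 0" using g a K by blast
  ultimately obtain as G where IH: "G holomorphic_on S" "\<forall>z\<in>K. G z \<noteq> 0" "set as \<subseteq> {z\<in>K. g z = 0}"
       "\<forall>z\<in>S. g z = prod_list (map (\<lambda>a. z - a) as) * G z"
    using Suc.IH[OF _ _ g(1)] by blast
  show ?case
  proof (intro exI[of _ "replicate m a @ as"] exI[of _ G] conjI)
    show "set (replicate m a @ as) \<subseteq> {z \<in> K. F z = 0}" using IH(3) Z a by auto
    show "\<forall>z\<in>S. F z = prod_list (map (\<lambda>a. z - a) (replicate m a @ as)) * G z"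
      using IH(4) g(3) by (simp add: prod_list_replicate)
  qed (use IH in auto)
qed

lemma factor_zeros:
  fixes F :: "complex \<Rightarrow> complex"
  assumes F: "F holomorphic_on S" and S: "open S" "connected S" and K: "compact K" "K \<subseteq> S"
    and nz: "\<exists>z\<in>S. F z \<noteq> 0"
  shows "\<exists>as G. G holomorphic_on S \<and> (\<forall>z\<in>K. G z \<noteq> 0) \<and> set as \<subseteq> {z\<in>K. F z = 0} \<and>
       (\<forall>z\<in>S. F z = prod_list (map (\<lambda>a. z - a) as) * G z)"
proof (cases "{z\<in>K. F z = 0} = {}")
  case True
  then show ?thesis using F by (intro exI[of _ "[]"] exI[of _ F]) auto
next
  case False
  then obtain a where "a \<in> K" "F a = 0" by auto
  then have "\<not> F constant_on S" using nz K unfolding constant_on_def by (metis subsetD)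
  then have "finite {z\<in>K. F z = 0}" using holomorphic_compact_finite_zeros[OF F S K] by blast
  then show ?thesis using factor_zeros_aux[OF S K(2) refl _ F nz] by blast
qed

lemma ln_norm_prod_list:
  fixes z :: complex
  assumes "\<forall>a\<in>set as. z \<noteq> a" "w \<noteq> 0"
  shows "ln (norm (prod_list (map (\<lambda>a. z - a) as) * w)) = sum_list (map (\<lambda>a. ln (norm (z - a))) as) + ln (norm w)"
  using assms
proof (induction as)
  case Nil
  then show ?case by simp
next
  case (Cons b as)
  have "prod_list (map (\<lambda>a. z - a) as) \<noteq> 0" using Cons.prems by (induction as) auto
  then have "ln (norm (prod_list (map (\<lambda>a. z - a) (b # as)) * w)) =
     ln (norm (z - b)) + ln (norm (prod_list (map (\<lambda>a. z - a) as) * w))"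
    using Cons.prems by (simp add: norm_mult ln_mult mult.assoc)
  then show ?case using Cons by simp
qed

lemma has_integral_sum_list:
  assumes "\<forall>a\<in>set as. (f a has_integral I a) S"
  shows "((\<lambda>x. sum_list (map (\<lambda>a. f a x) as)) has_integral sum_list (map I as)) S"
  using assms
proof (induction as)
  case Nil
  then show ?case by simp
next
  case (Cons a as)
  then show ?case by (simp add: has_integral_add)
qed

lemma jensen_ineq:
  fixes F :: "complex \<Rightarrow> complex"
  assumes F: "F holomorphic_on ball 0 1" and F0: "F 0 \<noteq> 0" and r: "0 < r" "r < 1"
    and circ_nz: "\<And>z. norm z = r \<Longrightarrow> F z \<noteq> 0"
  shows "\<exists>v. v \<ge> 2 * pi * ln (norm (F 0)) \<and> ((\<lambda>t. ln (norm (F (of_real r * cis t)))) has_integral v) {0..2*pi}"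
proof -
  define R where "R = (1 + r) / 2"
  have R: "r < R" "R < 1" using r unfolding R_def by auto
  have "cball 0 R \<subseteq> ball (0::complex) 1" using R by auto
  then obtain as G where G: "G holomorphic_on ball 0 1" "\<forall>z\<in>cball 0 R. G z \<noteq> 0"
      "set as \<subseteq> {z\<in>cball 0 R. F z = 0}" "\<forall>z\<in>ball 0 1. F z = prod_list (map (\<lambda>a. z - a) as) * G z"
    using factor_zeros[OF F open_ball connected_ball compact_cball[of 0 R]] F0 by (meson centre_in_ball zero_less_one)
  have as: "a \<noteq> 0" "norm a \<noteq> r" if "a \<in> set as" for a
    using G(3) that F0 circ_nz by auto
  define v where "v = (\<lambda>a. SOME v. v \<ge> 2 * pi * ln (norm a) \<and> ((\<lambda>t. ln (norm (of_real r * cis t - a))) has_integral v) {0..2*pi})"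
  have v: "v a \<ge> 2 * pi * ln (norm a) \<and> ((\<lambda>t. ln (norm (of_real r * cis t - a))) has_integral v a) {0..2*pi}"
    if "a \<in> set as" for a
    unfolding v_def by (rule someI_ex, rule ln_norm_linear_mean) (use as[OF that] r in auto)
  have I1: "((\<lambda>t. sum_list (map (\<lambda>a. ln (norm (of_real r * cis t - a))) as)) has_integral sum_list (map v as)) {0..2*pi}"
    by (rule has_integral_sum_list) (use v in auto)
  have I2: "((\<lambda>t. ln (norm (G (of_real r * cis t)))) has_integral (2 * pi * ln (norm (G 0)))) {0..2*pi}"
    by (rule ln_norm_mean_zero_free[OF holomorphic_on_subset[OF G(1)] _ r(1) R(1)]) (use G(2) R in auto)
  have eqt: "ln (norm (F (of_real r * cis t))) = sum_list (map (\<lambda>a. ln (norm (of_real r * cis t - a))) as) + ln (norm (G (of_real r * cis t)))" for t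
  proof -
    have "of_real r * cis t \<in> ball (0::complex) 1" using r by (simp add: norm_mult)
    moreover have "norm (of_real r * cis t) = r" using r by (simp add: norm_mult)
    then have "\<forall>a\<in>set as. of_real r * cis t \<noteq> a" using as by metis
    moreover have "G (of_real r * cis t) \<noteq> 0" using G(2) R r by (simp add: norm_mult)
    ultimately show ?thesis using G(4) ln_norm_prod_list by metis
  qed
  have I: "((\<lambda>t. ln (norm (F (of_real r * cis t)))) has_integral (sum_list (map v as) + 2 * pi * ln (norm (G 0)))) {0..2*pi}"
    unfolding eqt by (rule has_integral_add[OF I1 I2])
  have "G 0 \<noteq> 0" using G(2) R r by simp
  moreover have "\<forall>a\<in>set as. 0 \<noteq> a" using as by metis
  ultimately have "ln (norm (prod_list (map (\<lambda>a. 0 - a) as) * G 0)) = sum_list (map (\<lambda>a. ln (norm (0 - a))) as) + ln (norm (G 0))"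
    by (rule ln_norm_prod_list[rotated])
  moreover have "F 0 = prod_list (map (\<lambda>a. 0 - a) as) * G 0" using G(4) by simp
  ultimately have "ln (norm (F 0)) = sum_list (map (\<lambda>a. ln (norm (0 - a))) as) + ln (norm (G 0))"
    by simp
  then have "2 * pi * ln (norm (F 0)) = sum_list (map (\<lambda>a. 2 * pi * ln (norm a)) as) + 2 * pi * ln (norm (G 0))"
    by (simp add: sum_list_const_mult distrib_left)
  also have "\<dots> \<le> sum_list (map v as) + 2 * pi * ln (norm (G 0))"
    using v by (simp add: sum_list_mono)
  finally show ?thesis using I by blast
qed

lemma good_radius:
  fixes F :: "complex \<Rightarrow> complex"
  assumes F: "F holomorphic_on ball 0 1" and F0: "F 0 \<noteq> 0" and lo: "0 < lo" "lo < 1"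
  shows "\<exists>r. lo < r \<and> r < 1 \<and> (\<forall>z. norm z = r \<longrightarrow> F z \<noteq> 0)"
proof -
  define hi where "hi = (lo + 1) / 2"
  have hi: "lo < hi" "hi < 1" using lo unfolding hi_def by auto
  define Z where "Z = {z\<in>cball 0 hi. F z = 0}"
  have "finite Z"
  proof (cases "F constant_on ball 0 1")
    case True
    then obtain c where c: "\<And>z. z \<in> ball 0 1 \<Longrightarrow> F z = c" unfolding constant_on_def by blast
    have "F 0 = c" using c[of 0] by simp
    have "z \<notin> Z" for z
    proof
      assume "z \<in> Z"
      then have "z \<in> ball 0 1" "F z = 0" using hi unfolding Z_def by auto
      then show False using c \<open>F 0 = c\<close> F0 by metis
    qed
    then have "Z = {}" by blast
    then show ?thesis by simp
  next
    case False
    have sub: "cball 0 hi \<subseteq> ball (0::complex) 1" using hi by auto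
    show ?thesis unfolding Z_def
      by (rule holomorphic_compact_finite_zeros[OF F open_ball connected_ball compact_cball sub False])
  qed
  then have "finite (norm ` Z)" by simp
  moreover have "infinite {lo<..<hi}" using hi by simp
  ultimately have "infinite ({lo<..<hi} - norm ` Z)" using Diff_infinite_finite by blast
  then have "{lo<..<hi} - norm ` Z \<noteq> {}" by (metis finite.emptyI)
  then obtain r where r: "r \<in> {lo<..<hi}" "r \<notin> norm ` Z" by blast
  have "\<forall>z. norm z = r \<longrightarrow> F z \<noteq> 0"
  proof (intro allI impI notI)
    fix z assume "norm z = r" "F z = 0"
    then have "z \<in> Z" unfolding Z_def using r by auto
    then show False using r \<open>norm z = r\<close> by blast
  qed
  then show ?thesis using r hi by auto
qed

lemma radial_zero_null:
  fixes F :: "complex \<Rightarrow> complex"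
  assumes F: "F holomorphic_on ball 0 1" and bd: "\<forall>z\<in>ball 0 1. norm (F z) \<le> M" and F0: "F 0 \<noteq> 0"
  shows "AE t in lebesgue_on {0..2*pi}. \<not> ((\<lambda>r. F (of_real r * cis t)) \<longlongrightarrow> 0) (at_left 1)"
proof -
  have ex_r: "\<forall>n::nat. \<exists>r. 1 - 1 / (real n + 2) < r \<and> r < 1 \<and> (\<forall>z. norm z = r \<longrightarrow> F z \<noteq> 0)"
  proof
    fix n :: nat
    have "0 < 1 - 1 / (real n + 2)" "1 - 1 / (real n + 2) < 1" by (auto simp: field_simps)
    then show "\<exists>r. 1 - 1 / (real n + 2) < r \<and> r < 1 \<and> (\<forall>z. norm z = r \<longrightarrow> F z \<noteq> 0)"
      by (rule good_radius[OF F F0])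
  qed
  obtain rr where rra: "\<forall>n. 1 - 1 / (real n + 2) < rr n \<and> rr n < 1 \<and> (\<forall>z. norm z = rr n \<longrightarrow> F z \<noteq> 0)"
    using choice[OF ex_r] by blast
  have rr: "\<And>n. 1 - 1 / (real n + 2) < rr n" "\<And>n. rr n < 1"
     "\<And>n z. norm z = rr n \<Longrightarrow> F z \<noteq> 0"
    using rra by blast+
  have rr_pos: "0 < rr n" for n
  proof -
    have "0 \<le> 1 - 1 / (real n + 2)" by (auto simp: field_simps)
    then show ?thesis using rr(1)[of n] by linarith
  qed
  have lim1: "rr \<longlonglongrightarrow> 1"
  proof (rule tendsto_sandwich[of "\<lambda>n. 1 - 1 / (real n + 2)" _ _ "\<lambda>n. 1"])
    show "\<forall>\<^sub>F n in sequentially. 1 - 1 / (real n + 2) \<le> rr n"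
      by (rule always_eventually) (use rr(1) less_imp_le in blast)
    show "\<forall>\<^sub>F n in sequentially. rr n \<le> 1"
      by (rule always_eventually) (use rr(2) less_imp_le in blast)
    have "(\<lambda>n. 1 / (real n + 2)) \<longlonglongrightarrow> 0"
      by real_asymp
    then show "(\<lambda>n. 1 - 1 / (real n + 2)) \<longlonglongrightarrow> 1"
      using tendsto_diff[OF tendsto_const[of 1]] by fastforce
  qed simp
  have "\<forall>n. rr n \<in> {..<1} \<and> rr n \<noteq> 1"
    using rr(2) by (simp add: less_imp_neq)
  then have "\<forall>\<^sub>F n in sequentially. rr n \<in> {..<1} \<and> rr n \<noteq> 1"
    by (rule always_eventually)
  then have limL: "filterlim rr (at_left 1) sequentially"
    using lim1 by (simp add: filterlim_at)
  have "norm (F 0) \<le> M" using bd by simp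
  then have M0: "0 \<le> M" using norm_ge_zero[of "F 0"] by linarith
  define M' where "M' = M + 1"
  have M': "0 < M'" "M < M'" using M0 unfolding M'_def by auto
  define h where "h = (\<lambda>n t. ln M' - ln (norm (F (of_real (rr n) * cis t))))"
  have inball: "of_real (rr n) * cis t \<in> ball (0::complex) 1" for n t
    using rr_pos[of n] rr(2)[of n] by (simp add: norm_mult)
  have Fnz: "F (of_real (rr n) * cis t) \<noteq> 0" for n t
    using rr(3)[of "of_real (rr n) * cis t" n] rr_pos[of n] by (simp add: norm_mult)
  have h_pos: "0 < h n t" for n t
  proof -
    have "norm (F (of_real (rr n) * cis t)) \<le> M" using bd inball[of n t] by blast
    then have "norm (F (of_real (rr n) * cis t)) < M'" using M' by linarith
    then show ?thesis unfolding h_def using Fnz[of n t] by (simp add: ln_less_cancel_iff M')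
  qed
  have h_cont: "continuous_on {0..2*pi} (h n)" for n
  proof -
    have "continuous_on UNIV (\<lambda>t. of_real (rr n) * cis t)" by (intro continuous_intros)
    moreover have "continuous_on ((\<lambda>t. of_real (rr n) * cis t) ` UNIV) F"
      by (rule continuous_on_subset[OF holomorphic_on_imp_continuous_on[OF F]]) (use inball in auto)
    ultimately have "continuous_on UNIV (\<lambda>t. F (of_real (rr n) * cis t))"
      by (metis (no_types, lifting) continuous_on_compose comp_apply continuous_on_cong)
    then have "continuous_on UNIV (\<lambda>t. ln (norm (F (of_real (rr n) * cis t))))"
      by (intro continuous_on_ln continuous_on_norm) (auto simp: Fnz)
    then have "continuous_on UNIV (h n)" unfolding h_def by (intro continuous_on_diff continuous_on_const)
    then show ?thesis by (rule continuous_on_subset) simp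
  qed
  have h_meas: "h n \<in> borel_measurable (lebesgue_on {0..2*pi})" for n
    by (rule continuous_imp_measurable_on_sets_lebesgue[OF h_cont]) auto
  define C where "C = 2 * pi * ln M' - 2 * pi * ln (norm (F 0))"
  have int_le: "(\<integral>\<^sup>+ t. ennreal (h n t) \<partial>lebesgue_on {0..2*pi}) \<le> ennreal C" for n
  proof -
    obtain v where v: "v \<ge> 2 * pi * ln (norm (F 0))" "((\<lambda>t. ln (norm (F (of_real (rr n) * cis t)))) has_integral v) {0..2*pi}"
      using jensen_ineq[OF F F0 rr_pos rr(2), of n] rr(3)[of _ n] by blast
    have "((\<lambda>t. ln M') has_integral (2 * pi * ln M')) {0..2*pi}"
      using has_integral_const_real[of "ln M'" 0 "2*pi"] by simp
    from has_integral_diff[OF this v(2)]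
    have hi: "(h n has_integral (2 * pi * ln M' - v)) {0..2*pi}" unfolding h_def by simp
    have intg: "integrable (lebesgue_on {0..2*pi}) (h n)"
      by (rule continuous_imp_integrable_real[OF h_cont])
    have "(h n has_integral (integral\<^sup>L (lebesgue_on {0..2*pi}) (h n))) {0..2*pi}"
      by (rule has_integral_integral_lebesgue_on[OF intg]) auto
    then have eqL: "integral\<^sup>L (lebesgue_on {0..2*pi}) (h n) = 2 * pi * ln M' - v"
      using hi has_integral_unique by blast
    have "(\<integral>\<^sup>+ t. ennreal (h n t) \<partial>lebesgue_on {0..2*pi}) = ennreal (integral\<^sup>L (lebesgue_on {0..2*pi}) (h n))"
      by (rule nn_integral_eq_integral[OF intg], rule AE_I2) (use h_pos less_imp_le in blast)
    also have "\<dots> \<le> ennreal C" unfolding eqL C_def using v(1) by (intro ennreal_leI) linarith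
    finally show ?thesis .
  qed
  define u where "u = (\<lambda>n t. ennreal (h n t))"
  have u_meas: "u n \<in> borel_measurable (lebesgue_on {0..2*pi})" for n
    unfolding u_def by (rule measurable_compose[OF h_meas measurable_ennreal])
  have "(\<integral>\<^sup>+ t. liminf (\<lambda>n. u n t) \<partial>lebesgue_on {0..2*pi}) \<le> liminf (\<lambda>n. integral\<^sup>N (lebesgue_on {0..2*pi}) (u n))"
    by (rule nn_integral_liminf[OF u_meas])
  also have "\<dots> \<le> liminf (\<lambda>n. ennreal C)"
    by (rule Liminf_mono, rule always_eventually) (use int_le in \<open>simp add: u_def\<close>)
  also have "\<dots> = ennreal C" by (rule Liminf_const) simp
  finally have "(\<integral>\<^sup>+ t. liminf (\<lambda>n. u n t) \<partial>lebesgue_on {0..2*pi}) \<le> ennreal C" .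
  then have "(\<integral>\<^sup>+ t. liminf (\<lambda>n. u n t) \<partial>lebesgue_on {0..2*pi}) \<noteq> \<infinity>" by (auto simp: top_unique)
  then have AEfin: "AE t in lebesgue_on {0..2*pi}. liminf (\<lambda>n. u n t) \<noteq> \<infinity>"
    by (rule nn_integral_noteq_infinite[OF borel_measurable_liminf[OF u_meas]])
  show ?thesis
  proof (rule eventually_mono[OF AEfin], intro notI)
    fix t
    assume fin: "liminf (\<lambda>n. u n t) \<noteq> \<infinity>"
    assume rad: "((\<lambda>r. F (of_real r * cis t)) \<longlongrightarrow> 0) (at_left 1)"
    have seq: "(\<lambda>n. F (of_real (rr n) * cis t)) \<longlonglongrightarrow> 0"
      using filterlim_compose[OF rad limL] by simp
    have big: "ennreal B \<le> liminf (\<lambda>n. u n t)" for B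
    proof (rule Liminf_bounded)
      have "exp (ln M' - B) > 0" by simp
      then have "\<forall>\<^sub>F n in sequentially. dist (F (of_real (rr n) * cis t)) 0 < exp (ln M' - B)"
        by (rule tendstoD[OF seq])
      then have "\<forall>\<^sub>F n in sequentially. norm (F (of_real (rr n) * cis t)) < exp (ln M' - B)"
        by (simp add: dist_norm)
      then show "\<forall>\<^sub>F n in sequentially. ennreal B \<le> u n t"
      proof eventually_elim
        case (elim n)
        have "ln (norm (F (of_real (rr n) * cis t))) < ln (exp (ln M' - B))"
          by (subst ln_less_cancel_iff) (use elim Fnz[of n t] in auto)
        then have "ln (norm (F (of_real (rr n) * cis t))) < ln M' - B" by simp
        then have "B \<le> h n t" unfolding h_def by simp
        then show ?case unfolding u_def by (rule ennreal_leI)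
      qed
    qed
    obtain x where x: "liminf (\<lambda>n. u n t) = ennreal x" "0 \<le> x" using fin by (cases "liminf (\<lambda>n. u n t)") auto
    have "ennreal (x + 1) \<le> ennreal x" using big[of "x+1"] x by simp
    then show False using x by simp
  qed
qed

lemma circ_nontriv: "\<not> (AE t in circ. False)"
proof
  assume "AE t in circ. False"
  then have "ae_filter circ = bot" by (simp add: trivial_limit_def)
  then have "emeasure circ (space circ) = 0" by (simp add: ae_filter_eq_bot_iff)
  moreover have "emeasure circ (space circ) = emeasure lebesgue {0..2*pi}"
    unfolding circ_def by (simp add: emeasure_restrict_space)
  moreover have "emeasure lebesgue {0..2*pi} = ennreal (2*pi)"
    by simp
  ultimately show False by simp
qed

lemma AE_circ_contra:
  assumes "AE t in circ. P t" "AE t in circ. \<not> P t" shows False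
proof -
  have "AE t in circ. False" using assms by eventually_elim simp
  then show False using circ_nontriv by blast
qed

lemma radial_zero_null_gen:
  fixes F :: "complex \<Rightarrow> complex"
  assumes F: "F holomorphic_on ball 0 1" and bd: "\<forall>z\<in>ball 0 1. norm (F z) \<le> M"
    and nz: "\<exists>z\<in>ball 0 1. F z \<noteq> 0"
  shows "AE t in circ. \<not> ((\<lambda>r. F (of_real r * cis t)) \<longlongrightarrow> 0) (at_left 1)"
proof -
  obtain n g where g: "g holomorphic_on ball 0 1" "g 0 \<noteq> 0" "\<forall>z\<in>ball 0 1. F z = (z - 0) ^ n * g z"
    using factor_one_zero[OF F open_ball connected_ball _ nz] by (meson centre_in_ball zero_less_one)
  have "compact (g ` cball 0 (1/2))"
    by (rule compact_continuous_image[OF holomorphic_on_imp_continuous_on[OF holomorphic_on_subset[OF g(1)]]]) auto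
  then have "bounded (g ` cball 0 (1/2))" by (rule compact_imp_bounded)
  then obtain M1 where "\<forall>x\<in>g ` cball 0 (1/2). norm x \<le> M1" unfolding bounded_iff by blast
  then have M1: "\<forall>z\<in>cball 0 (1/2). norm (g z) \<le> M1" by blast
  define M2 where "M2 = max M1 (M * 2 ^ n)"
  have bdg: "\<forall>z\<in>ball 0 1. norm (g z) \<le> M2"
  proof
    fix z :: complex assume z: "z \<in> ball 0 1"
    show "norm (g z) \<le> M2"
    proof (cases "norm z \<le> 1/2")
      case True
      then show ?thesis using M1 unfolding M2_def by force
    next
      case False
      then have zpos: "0 < norm z" by linarith
      have "norm (F z) = norm z ^ n * norm (g z)" using g(3) z by (simp add: norm_mult norm_power)
      moreover have "norm (F z) \<le> M" using bd z by blast
      moreover have "(1/2) ^ n \<le> norm z ^ n" using False by (intro power_mono) auto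
      moreover have "(1/2) ^ n * norm (g z) \<le> norm z ^ n * norm (g z)"
        by (rule mult_right_mono) (use \<open>(1/2) ^ n \<le> norm z ^ n\<close> in auto)
      ultimately have "(1/2) ^ n * norm (g z) \<le> M" by linarith
      then have "norm (g z) \<le> M * 2 ^ n" by (simp add: field_simps)
      then show ?thesis unfolding M2_def by simp
    qed
  qed
  have ae: "AE t in circ. \<not> ((\<lambda>r. g (of_real r * cis t)) \<longlongrightarrow> 0) (at_left 1)"
    unfolding circ_def by (rule radial_zero_null[OF g(1) bdg g(2)])
  show ?thesis
  proof (rule eventually_mono[OF ae], intro notI)
    fix t
    assume ng: "\<not> ((\<lambda>r. g (of_real r * cis t)) \<longlongrightarrow> 0) (at_left 1)"
    assume rf: "((\<lambda>r. F (of_real r * cis t)) \<longlongrightarrow> 0) (at_left 1)"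
    have "((\<lambda>r. (of_real r * cis t) ^ n) \<longlongrightarrow> (of_real 1 * cis t) ^ n) (at_left 1)"
      by (intro tendsto_intros)
    then have pw: "((\<lambda>r. (of_real r * cis t) ^ n) \<longlongrightarrow> cis t ^ n) (at_left 1)" by simp
    have "((\<lambda>r. F (of_real r * cis t) / (of_real r * cis t) ^ n) \<longlongrightarrow> 0 / cis t ^ n) (at_left 1)"
      by (rule tendsto_divide[OF rf pw]) simp
    then have lim: "((\<lambda>r. F (of_real r * cis t) / (of_real r * cis t) ^ n) \<longlongrightarrow> 0) (at_left 1)" by simp
    have ev: "\<forall>\<^sub>F r in at_left 1. F (of_real r * cis t) / (of_real r * cis t) ^ n = g (of_real r * cis t)"
    proof (rule eventually_mono[OF eventually_at_left_real[of 0 1]])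
      fix r :: real assume r: "r \<in> {0<..<1}"
      then have "of_real r * cis t \<in> ball (0::complex) 1" "of_real r * cis t \<noteq> 0"
        by (auto simp: norm_mult)
      then show "F (of_real r * cis t) / (of_real r * cis t) ^ n = g (of_real r * cis t)"
        using g(3) by simp
    qed simp
    have "((\<lambda>r. g (of_real r * cis t)) \<longlongrightarrow> 0) (at_left 1)"
      using tendsto_cong[OF ev] lim by simp
    then show False using ng by simp
  qed
qed

lemma Hinf_nonzero_ae:
  assumes f: "f \<in> Hinf" and nz: "\<not> (AE t in circ. f t = 0)"
  shows "AE t in circ. f t \<noteq> 0"
proof -
  obtain F where F: "F holomorphic_on ball 0 1" "bounded (F ` ball 0 1)"
    and rad: "AE t in circ. ((\<lambda>r. F (complex_of_real r * cis t)) \<longlongrightarrow> f t) (at_left 1)"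
    using f unfolding Hinf_def by blast
  obtain M where bd: "\<forall>z\<in>ball 0 1. norm (F z) \<le> M" using F(2) unfolding bounded_iff by blast
  show ?thesis
  proof (cases "\<exists>z\<in>ball 0 1. F z \<noteq> 0")
    case True
    have ae: "AE t in circ. \<not> ((\<lambda>r. F (of_real r * cis t)) \<longlongrightarrow> 0) (at_left 1)"
      by (rule radial_zero_null_gen[OF F(1) bd True])
    show ?thesis using ae rad
    proof eventually_elim
      case (elim t)
      show "f t \<noteq> 0"
      proof
        assume "f t = 0"
        then show False using elim by simp
      qed
    qed
  next
    case False
    have "AE t in circ. f t = 0"
    proof (rule eventually_mono[OF rad])
      fix t assume lt: "((\<lambda>r. F (complex_of_real r * cis t)) \<longlongrightarrow> f t) (at_left 1)"
      have "\<forall>\<^sub>F r in at_left 1. F (complex_of_real r * cis t) = 0"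
      proof (rule eventually_mono[OF eventually_at_left_real[of 0 1]])
        fix r :: real assume "r \<in> {0<..<1}"
        then have "complex_of_real r * cis t \<in> ball 0 1" by (auto simp: norm_mult)
        then show "F (complex_of_real r * cis t) = 0" using False by blast
      qed simp
      then have "((\<lambda>r. F (complex_of_real r * cis t)) \<longlongrightarrow> 0) (at_left 1)" by (rule tendsto_eventually)
      then show "f t = 0" using lt tendsto_unique trivial_limit_at_left_real by blast
    qed
    then show ?thesis using nz by blast
  qed
qed

lemma HinfI:
  assumes "F holomorphic_on ball 0 1" "\<forall>z\<in>ball 0 1. norm (F z) \<le> M"
    "AE t in circ. ((\<lambda>r. F (complex_of_real r * cis t)) \<longlongrightarrow> f t) (at_left 1)"
  shows "f \<in> Hinf"
proof -
  have "bounded (F ` ball 0 1)" unfolding bounded_iff using assms(2) by blast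
  then show ?thesis unfolding Hinf_def using assms(1,3) by blast
qed

lemma HinfE:
  assumes "f \<in> Hinf"
  obtains F M where "F holomorphic_on ball 0 1" "\<forall>z\<in>ball 0 1. norm (F z) \<le> M"
    "AE t in circ. ((\<lambda>r. F (complex_of_real r * cis t)) \<longlongrightarrow> f t) (at_left 1)"
proof -
  obtain F where F: "F holomorphic_on ball 0 1" "bounded (F ` ball 0 1)"
    "AE t in circ. ((\<lambda>r. F (complex_of_real r * cis t)) \<longlongrightarrow> f t) (at_left 1)"
    using assms unfolding Hinf_def by blast
  obtain M where "\<forall>z\<in>ball 0 1. norm (F z) \<le> M" using F(2) unfolding bounded_iff by blast
  then show ?thesis using that F by blast
qed

lemma Hinf_const: "(\<lambda>t. c) \<in> Hinf"
  by (rule HinfI[where F="\<lambda>z. c" and M="norm c"]) auto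

lemma Hinf_mult:
  assumes "f \<in> Hinf" "g \<in> Hinf" shows "(\<lambda>t. f t * g t) \<in> Hinf"
proof -
  obtain F M where F: "F holomorphic_on ball 0 1" "\<forall>z\<in>ball 0 1. norm (F z) \<le> M"
    "AE t in circ. ((\<lambda>r. F (complex_of_real r * cis t)) \<longlongrightarrow> f t) (at_left 1)"
    using HinfE[OF assms(1)] by blast
  obtain G N where G: "G holomorphic_on ball 0 1" "\<forall>z\<in>ball 0 1. norm (G z) \<le> N"
    "AE t in circ. ((\<lambda>r. G (complex_of_real r * cis t)) \<longlongrightarrow> g t) (at_left 1)"
    using HinfE[OF assms(2)] by blast
  show ?thesis
  proof (rule HinfI[where F="\<lambda>z. F z * G z" and M="M * N"])
    show "(\<lambda>z. F z * G z) holomorphic_on ball 0 1" using F(1) G(1) by (intro holomorphic_intros)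
    show "\<forall>z\<in>ball 0 1. norm (F z * G z) \<le> M * N"
      using F(2) G(2) by (auto simp: norm_mult intro!: mult_mono order_trans[OF norm_ge_zero])
    show "AE t in circ. ((\<lambda>r. F (complex_of_real r * cis t) * G (complex_of_real r * cis t)) \<longlongrightarrow> f t * g t) (at_left 1)"
      using F(3) G(3) by eventually_elim (rule tendsto_mult)
  qed
qed

lemma Hinf_add:
  assumes "f \<in> Hinf" "g \<in> Hinf" shows "(\<lambda>t. f t + g t) \<in> Hinf"
proof -
  obtain F M where F: "F holomorphic_on ball 0 1" "\<forall>z\<in>ball 0 1. norm (F z) \<le> M"
    "AE t in circ. ((\<lambda>r. F (complex_of_real r * cis t)) \<longlongrightarrow> f t) (at_left 1)"
    using HinfE[OF assms(1)] by blast
  obtain G N where G: "G holomorphic_on ball 0 1" "\<forall>z\<in>ball 0 1. norm (G z) \<le> N"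
    "AE t in circ. ((\<lambda>r. G (complex_of_real r * cis t)) \<longlongrightarrow> g t) (at_left 1)"
    using HinfE[OF assms(2)] by blast
  show ?thesis
  proof (rule HinfI[where F="\<lambda>z. F z + G z" and M="M + N"])
    show "(\<lambda>z. F z + G z) holomorphic_on ball 0 1" using F(1) G(1) by (intro holomorphic_intros)
    show "\<forall>z\<in>ball 0 1. norm (F z + G z) \<le> M + N"
      using F(2) G(2) by (auto intro: order_trans[OF norm_triangle_ineq] add_mono)
    show "AE t in circ. ((\<lambda>r. F (complex_of_real r * cis t) + G (complex_of_real r * cis t)) \<longlongrightarrow> f t + g t) (at_left 1)"
      using F(3) G(3) by eventually_elim (rule tendsto_add)
  qed
qed

lemma NevI:
  assumes "f \<in> Hinf" "g \<in> Hinf" "\<not> (AE t in circ. g t = 0)" "AE t in circ. h t = f t / g t"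
  shows "h \<in> Nev"
  using assms unfolding Nev_def by blast

lemma NevE:
  assumes "h \<in> Nev"
  obtains f g where "f \<in> Hinf" "g \<in> Hinf" "AE t in circ. g t \<noteq> 0" "AE t in circ. h t = f t / g t"
proof -
  obtain f g where fg: "f \<in> Hinf" "g \<in> Hinf" "\<not> (AE t in circ. g t = 0)" "AE t in circ. h t = f t / g t"
    using assms unfolding Nev_def by blast
  have "AE t in circ. g t \<noteq> 0" by (rule Hinf_nonzero_ae[OF fg(2,3)])
  then show ?thesis using that fg by blast
qed

lemma NevI':
  assumes "f \<in> Hinf" "g \<in> Hinf" "AE t in circ. g t \<noteq> 0" "AE t in circ. h t = f t / g t"
  shows "h \<in> Nev"
proof (rule NevI[OF assms(1,2) _ assms(4)])
  show "\<not> (AE t in circ. g t = 0)"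
  proof
    assume "AE t in circ. g t = 0"
    then have "AE t in circ. \<not> (g t \<noteq> 0)" by simp
    then show False by (rule AE_circ_contra[OF assms(3)])
  qed
qed

lemma Nev_cong:
  assumes "h \<in> Nev" "AE t in circ. h t = h' t" shows "h' \<in> Nev"
proof -
  obtain f g where fg: "f \<in> Hinf" "g \<in> Hinf" "AE t in circ. g t \<noteq> 0" "AE t in circ. h t = f t / g t"
    using NevE[OF assms(1)] by blast
  have "AE t in circ. h' t = f t / g t" using fg(4) assms(2) by eventually_elim simp
  then show ?thesis using NevI'[OF fg(1-3)] by blast
qed

lemma Nev_const: "(\<lambda>t. c) \<in> Nev"
  by (rule NevI'[OF Hinf_const[of c] Hinf_const[of 1]]) auto

lemma Nev_mult:
  assumes "h1 \<in> Nev" "h2 \<in> Nev" shows "(\<lambda>t. h1 t * h2 t) \<in> Nev"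
proof -
  obtain f1 g1 where 1: "f1 \<in> Hinf" "g1 \<in> Hinf" "AE t in circ. g1 t \<noteq> 0" "AE t in circ. h1 t = f1 t / g1 t"
    using NevE[OF assms(1)] by blast
  obtain f2 g2 where 2: "f2 \<in> Hinf" "g2 \<in> Hinf" "AE t in circ. g2 t \<noteq> 0" "AE t in circ. h2 t = f2 t / g2 t"
    using NevE[OF assms(2)] by blast
  show ?thesis
  proof (rule NevI'[OF Hinf_mult[OF 1(1) 2(1)] Hinf_mult[OF 1(2) 2(2)]])
    show "AE t in circ. g1 t * g2 t \<noteq> 0" using 1(3) 2(3) by eventually_elim simp
    show "AE t in circ. h1 t * h2 t = f1 t * f2 t / (g1 t * g2 t)" using 1(4) 2(4) by eventually_elim simp
  qed
qed

lemma Nev_add: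
  assumes "h1 \<in> Nev" "h2 \<in> Nev" shows "(\<lambda>t. h1 t + h2 t) \<in> Nev"
proof -
  obtain f1 g1 where 1: "f1 \<in> Hinf" "g1 \<in> Hinf" "AE t in circ. g1 t \<noteq> 0" "AE t in circ. h1 t = f1 t / g1 t"
    using NevE[OF assms(1)] by blast
  obtain f2 g2 where 2: "f2 \<in> Hinf" "g2 \<in> Hinf" "AE t in circ. g2 t \<noteq> 0" "AE t in circ. h2 t = f2 t / g2 t"
    using NevE[OF assms(2)] by blast
  show ?thesis
  proof (rule NevI'[OF Hinf_add[OF Hinf_mult[OF 1(1) 2(2)] Hinf_mult[OF 2(1) 1(2)]] Hinf_mult[OF 1(2) 2(2)]])
    show "AE t in circ. g1 t * g2 t \<noteq> 0" using 1(3) 2(3) by eventually_elim simp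
    show "AE t in circ. h1 t + h2 t = (f1 t * g2 t + f2 t * g1 t) / (g1 t * g2 t)"
      using 1(3,4) 2(3,4) by eventually_elim (simp add: field_simps)
  qed
qed

lemma Nev_nonzero_ae:
  assumes "h \<in> Nev" "\<not> (AE t in circ. h t = 0)" shows "AE t in circ. h t \<noteq> 0"
proof -
  obtain f g where fg: "f \<in> Hinf" "g \<in> Hinf" "AE t in circ. g t \<noteq> 0" "AE t in circ. h t = f t / g t"
    using NevE[OF assms(1)] by blast
  have "\<not> (AE t in circ. f t = 0)"
  proof
    assume "AE t in circ. f t = 0"
    then have "AE t in circ. h t = 0" using fg(4) by eventually_elim simp
    then show False using assms(2) by blast
  qed
  then have "AE t in circ. f t \<noteq> 0" by (rule Hinf_nonzero_ae[OF fg(1)])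
  then show ?thesis using fg(3,4) by eventually_elim simp
qed

lemma Nev_inverse:
  assumes "h \<in> Nev" "\<not> (AE t in circ. h t = 0)" shows "(\<lambda>t. inverse (h t)) \<in> Nev"
proof -
  obtain f g where fg: "f \<in> Hinf" "g \<in> Hinf" "AE t in circ. g t \<noteq> 0" "AE t in circ. h t = f t / g t"
    using NevE[OF assms(1)] by blast
  have "\<not> (AE t in circ. f t = 0)"
  proof
    assume "AE t in circ. f t = 0"
    then have "AE t in circ. h t = 0" using fg(4) by eventually_elim simp
    then show False using assms(2) by blast
  qed
  then have fnz: "AE t in circ. f t \<noteq> 0" by (rule Hinf_nonzero_ae[OF fg(1)])
  show ?thesis
  proof (rule NevI'[OF fg(2) fg(1) fnz])
    show "AE t in circ. inverse (h t) = g t / f t" using fg(4) by eventually_elim simp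
  qed
qed

lemma Nev_divide:
  assumes "h1 \<in> Nev" "h2 \<in> Nev" "\<not> (AE t in circ. h2 t = 0)" shows "(\<lambda>t. h1 t / h2 t) \<in> Nev"
  using Nev_mult[OF assms(1) Nev_inverse[OF assms(2,3)]] by (simp add: divide_inverse)

lemma Nev_sum:
  assumes "\<And>i. i \<in> S \<Longrightarrow> f i \<in> Nev" shows "(\<lambda>t. \<Sum>i\<in>S. f i t) \<in> Nev"
proof (cases "finite S")
  case True
  then show ?thesis using assms
  proof (induction S rule: finite_induct)
    case empty
    then show ?case using Nev_const[of 0] by simp
  next
    case (insert x F)
    then show ?case using Nev_add[of "f x" "\<lambda>t. \<Sum>i\<in>F. f i t"] by simp
  qed
next
  case False
  then show ?thesis using Nev_const[of 0] by simp
qed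

lemma Nev_prod:
  assumes "\<And>i. i \<in> S \<Longrightarrow> f i \<in> Nev" shows "(\<lambda>t. \<Prod>i\<in>S. f i t) \<in> Nev"
proof (cases "finite S")
  case True
  then show ?thesis using assms
  proof (induction S rule: finite_induct)
    case empty
    then show ?case using Nev_const[of 1] by simp
  next
    case (insert x F)
    then show ?case using Nev_mult[of "f x" "\<lambda>t. \<Prod>i\<in>F. f i t"] by simp
  qed
next
  case False
  then show ?thesis using Nev_const[of 1] by simp
qed

lemma Nev_det:
  fixes M :: "real \<Rightarrow> complex ^'n::finite ^'n"
  assumes "\<And>i j. (\<lambda>t. M t $ i $ j) \<in> Nev"
  shows "(\<lambda>t. det (M t)) \<in> Nev"
proof -
  have "(\<lambda>t. \<Sum>p\<in>{p. p permutes (UNIV::'n set)}. of_int (sign p) * (\<Prod>i\<in>UNIV. M t $ i $ p i)) \<in> Nev"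
  proof (rule Nev_sum)
    fix p assume "p \<in> {p. p permutes (UNIV::'n set)}"
    show "(\<lambda>t. of_int (sign p) * (\<Prod>i\<in>UNIV. M t $ i $ p i)) \<in> Nev"
      by (rule Nev_mult[OF Nev_const Nev_prod]) (rule assms)
  qed
  then show ?thesis unfolding det_def .
qed

lemma Nev_vec_mult:
  fixes X :: "real \<Rightarrow> complex ^'m::finite ^'l::finite"
  assumes "\<And>i j. (\<lambda>t. X t $ i $ j) \<in> Nev" "v \<in> Nev_vec"
  shows "(\<lambda>t. X t *v v t) \<in> Nev_vec"
  unfolding Nev_vec_def mem_Collect_eq
proof
  fix i
  have "(\<lambda>t. \<Sum>j\<in>UNIV. X t $ i $ j * v t $ j) \<in> Nev"
    by (rule Nev_sum, rule Nev_mult[OF assms(1)]) (use assms(2) in \<open>simp add: Nev_vec_def\<close>)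
  then show "(\<lambda>t. (X t *v v t) $ i) \<in> Nev" by (simp add: matrix_vector_mult_def)
qed

lemma mv_smult:
  fixes X :: "'a::comm_ring_1 ^'m::finite ^'l::finite"
  shows "X *v (c *s y) = c *s (X *v y)"
  by (simp add: vec_eq_iff matrix_vector_mult_def sum_distrib_left algebra_simps)

lemma column_mult:
  fixes X :: "'a::comm_ring_1 ^'m::finite ^'l::finite" and Y :: "'a ^'r::finite ^'m"
  shows "column i (X ** Y) = X *v column i Y"
  by (simp add: vec_eq_iff matrix_vector_mult_def matrix_matrix_mult_def column_def)

lemma sum_column_mult:
  fixes X :: "'a::comm_ring_1 ^'m::finite ^'l::finite" and Y :: "'a ^'r::finite ^'m"
  shows "(\<Sum>i\<in>S. c i *s column i (X ** Y)) = X *v (\<Sum>i\<in>S. c i *s column i Y)"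
proof (cases "finite S")
  case True
  then show ?thesis
  proof (induction S rule: finite_induct)
    case empty
    then show ?case by (simp add: matrix_vector_mult_0_right)
  next
    case (insert x F)
    then show ?case by (simp add: column_mult mv_smult matrix_vector_right_distrib)
  qed
next
  case False
  then show ?thesis by (simp add: matrix_vector_mult_0_right)
qed

lemma rank_full_minor:
  fixes M :: "'a::field ^'m::finite ^'l::finite"
  assumes "CARD('m) \<le> rank M"
  shows "\<exists>\<rho>::'m \<Rightarrow> 'l. det (\<chi> i j. M $ \<rho> i $ j) \<noteq> 0"
proof -
  obtain B where B: "B \<subseteq> rows M" "vec.independent B" "card B = vec.dim (rows M)"
    by (rule vec.basis_exists[of "rows M"])
  have cB: "CARD('m) \<le> card B" using B(3) assms unfolding row_rank_def_gen by simp
  then obtain B' where B': "B' \<subseteq> B" "card B' = CARD('m)" "finite B'"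
    by (rule obtain_subset_with_card_n)
  have indB': "vec.independent B'" using vec.independent_mono[OF B(2) B'(1)] .
  obtain \<beta> where \<beta>: "bij_betw \<beta> (UNIV::'m set) B'"
    using finite_same_card_bij[of "UNIV::'m set" B'] B'(2,3) by auto
  have exi: "\<forall>k. \<exists>i. row i M = \<beta> k"
  proof
    fix k
    have "\<beta> k \<in> rows M" using \<beta> B'(1) B(1) by (auto simp: bij_betw_def)
    then show "\<exists>i. row i M = \<beta> k" unfolding rows_def by auto
  qed
  obtain \<rho> where \<rho>0: "\<forall>k. row (\<rho> k) M = \<beta> k" using choice[OF exi] by blast
  then have \<rho>: "\<And>k. row (\<rho> k) M = \<beta> k" by blast
  define S where "S = (\<chi> i j. M $ \<rho> i $ j)"
  have rowS: "row k S = \<beta> k" for k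
    using \<rho>[of k] unfolding S_def row_def by (simp add: vec_eq_iff)
  have "\<forall>c. sum (\<lambda>i::'m. c i *s row i S) UNIV = 0 \<longrightarrow> (\<forall>i. c i = 0)"
  proof (intro allI impI)
    fix c :: "'m \<Rightarrow> 'a" and i
    assume c: "sum (\<lambda>i::'m. c i *s row i S) UNIV = 0"
    define u where "u = (\<lambda>v. c (inv_into UNIV \<beta> v))"
    have inj: "inj \<beta>" using \<beta> by (simp add: bij_betw_def)
    have img: "\<beta> ` UNIV = B'" using \<beta> by (simp add: bij_betw_def)
    have "(\<Sum>v\<in>B'. u v *s v) = (\<Sum>k\<in>UNIV. u (\<beta> k) *s \<beta> k)"
      unfolding img[symmetric] by (rule sum.reindex[OF inj, unfolded o_def])
    also have "\<dots> = (\<Sum>k\<in>UNIV. c k *s row k S)"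
      unfolding u_def rowS using inj by simp
    finally have "(\<Sum>v\<in>B'. u v *s v) = 0" using c by simp
    then have "\<forall>v\<in>B'. u v = 0" using indB' B'(3) by (simp add: vec.independent_explicit)
    then have "u (\<beta> i) = 0" using img by blast
    then show "c i = 0" unfolding u_def using inj by simp
  qed
  then have "invertible S"
    unfolding invertible_right_inverse matrix_right_invertible_independent_rows .
  then have "det S \<noteq> 0" by (simp add: invertible_det_nz)
  then show ?thesis unfolding S_def by blast
qed

lemma indep_equiv:
  fixes A :: "real \<Rightarrow> complex ^ 'm::finite ^ 'l::finite"
    and \<Phi> :: "real \<Rightarrow> complex ^ 'r::finite ^ 'm"
  assumes Aent: "\<And>i j. (\<lambda>t. A t $ i $ j) \<in> Nev"
    and rho: "\<not> (AE t in circ. det (\<chi> i j. A t $ \<rho> i $ j) = 0)"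
  shows "indep_mod_Nev (\<lambda>k t. column k (\<Phi> t)) S = indep_mod_Nev (\<lambda>k t. column k (A t ** \<Phi> t)) S"
proof -
  define V where "V = (\<lambda>a t. \<Sum>i\<in>S. a i t *s column i (\<Phi> t))"
  have psi: "(\<lambda>t. \<Sum>i\<in>S. a i t *s column i (A t ** \<Phi> t)) = (\<lambda>t. A t *v V a t)" for a
    unfolding V_def by (simp add: sum_column_mult)
  define d where "d = (\<lambda>t. det (\<chi> i j. A t $ \<rho> i $ j))"
  have dN: "d \<in> Nev" unfolding d_def by (rule Nev_det) (simp add: Aent)
  have dnz: "\<not> (AE t in circ. d t = 0)" using rho unfolding d_def .
  have dae: "AE t in circ. d t \<noteq> 0" by (rule Nev_nonzero_ae[OF dN dnz])
  have recover: "V a \<in> Nev_vec" if W: "(\<lambda>t. A t *v V a t) \<in> Nev_vec" for a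
    unfolding Nev_vec_def mem_Collect_eq
  proof
    fix k :: 'm
    define N where "N = (\<lambda>t. det (\<chi> i j. if j = k then (A t *v V a t) $ \<rho> i else A t $ \<rho> i $ j))"
    have NN: "N \<in> Nev" unfolding N_def
    proof (rule Nev_det)
      fix i j :: 'm
      show "(\<lambda>t. (\<chi> i j. if j = k then (A t *v V a t) $ \<rho> i else A t $ \<rho> i $ j) $ i $ j) \<in> Nev"
      proof (cases "j = k")
        case True
        then show ?thesis using W by (simp add: Nev_vec_def)
      next
        case False
        then show ?thesis by (simp add: Aent)
      qed
    qed
    have eq: "N t = V a t $ k * d t" for t
    proof -
      let ?M = "(\<chi> i j. A t $ \<rho> i $ j) :: complex ^'m ^'m"
      have mv: "(?M *v V a t) $ i = (A t *v V a t) $ \<rho> i" for i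
        by (simp add: matrix_vector_mult_def)
      have "(\<chi> i j. if j = k then (A t *v V a t) $ \<rho> i else A t $ \<rho> i $ j) =
            (\<chi> i j. if j = k then (?M *v V a t) $ i else ?M $ i $ j)"
        by (simp add: vec_eq_iff matrix_vector_mult_def)
      then have "N t = det (\<chi> i j. if j = k then (?M *v V a t) $ i else ?M $ i $ j)"
        unfolding N_def by simp
      also have "\<dots> = V a t $ k * det ?M" by (rule cramer_lemma)
      finally show ?thesis unfolding d_def .
    qed
    have "(\<lambda>t. N t / d t) \<in> Nev" by (rule Nev_divide[OF NN dN dnz])
    moreover have "AE t in circ. N t / d t = V a t $ k"
      using dae by eventually_elim (simp add: eq)
    ultimately show "(\<lambda>t. V a t $ k) \<in> Nev" by (rule Nev_cong)
  qed
  show ?thesis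
  proof
    assume ind: "indep_mod_Nev (\<lambda>k t. column k (\<Phi> t)) S"
    show "indep_mod_Nev (\<lambda>k t. column k (A t ** \<Phi> t)) S"
      unfolding indep_mod_Nev_def
    proof (intro allI impI)
      fix a :: "'r \<Rightarrow> real \<Rightarrow> complex"
      assume aN: "\<forall>i\<in>S. a i \<in> Nev"
      assume "(\<lambda>t. \<Sum>i\<in>S. a i t *s column i (A t ** \<Phi> t)) \<in> Nev_vec"
      then have "(\<lambda>t. A t *v V a t) \<in> Nev_vec" unfolding psi .
      then have "V a \<in> Nev_vec" by (rule recover)
      then show "\<forall>i\<in>S. AE t in circ. a i t = 0"
        using ind aN unfolding indep_mod_Nev_def V_def by blast
    qed
  next
    assume ind: "indep_mod_Nev (\<lambda>k t. column k (A t ** \<Phi> t)) S"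
    show "indep_mod_Nev (\<lambda>k t. column k (\<Phi> t)) S"
      unfolding indep_mod_Nev_def
    proof (intro allI impI)
      fix a :: "'r \<Rightarrow> real \<Rightarrow> complex"
      assume aN: "\<forall>i\<in>S. a i \<in> Nev"
      assume "(\<lambda>t. \<Sum>i\<in>S. a i t *s column i (\<Phi> t)) \<in> Nev_vec"
      then have "V a \<in> Nev_vec" unfolding V_def .
      then have "(\<lambda>t. A t *v V a t) \<in> Nev_vec" by (rule Nev_vec_mult[OF Aent])
      then have "(\<lambda>t. \<Sum>i\<in>S. a i t *s column i (A t ** \<Phi> t)) \<in> Nev_vec" unfolding psi .
      then show "\<forall>i\<in>S. AE t in circ. a i t = 0"
        using ind aN unfolding indep_mod_Nev_def by blast
    qed
  qed
qed

theorem mainTheorem19: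
  fixes A :: "real \<Rightarrow> complex ^ 'm::finite ^ 'l::finite"
    and \<Phi> :: "real \<Rightarrow> complex ^ 'r::finite ^ 'm"
  assumes "CARD('m) \<le> CARD('l)"
    and "\<forall>i j. (\<lambda>t. A t $ i $ j) \<in> Nev_inf"
    and "Rank A = CARD('m)"
    and "\<forall>i j. (\<lambda>t. \<Phi> t $ i $ j) \<in> L2"
  shows "ind_Nev (\<lambda>k t. column k (\<Phi> t)) = ind_Nev (\<lambda>k t. column k (A t ** \<Phi> t))"
proof -
  have Aent: "\<And>i j. (\<lambda>t. A t $ i $ j) \<in> Nev" using assms(2) unfolding Nev_inf_def by blast
  have "\<exists>\<rho>::'m \<Rightarrow> 'l. \<not> (AE t in circ. det (\<chi> i j. A t $ \<rho> i $ j) = 0)"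
  proof -
    have False if all: "\<forall>\<rho>::'m \<Rightarrow> 'l. AE t in circ. det (\<chi> i j. A t $ \<rho> i $ j) = 0"
    proof -
      have "AE t in circ. \<forall>\<rho>\<in>(UNIV :: ('m \<Rightarrow> 'l) set). det (\<chi> i j. A t $ \<rho> i $ j) = 0"
        by (rule AE_finite_allI) (use all in simp_all)
      then have "AE t in circ. rank (A t) \<le> CARD('m) - 1"
      proof (rule eventually_mono)
        fix t assume h: "\<forall>\<rho>\<in>(UNIV :: ('m \<Rightarrow> 'l) set). det (\<chi> i j. A t $ \<rho> i $ j) = 0"
        show "rank (A t) \<le> CARD('m) - 1"
        proof (rule ccontr)
          assume "\<not> rank (A t) \<le> CARD('m) - 1"
          then have "CARD('m) \<le> rank (A t)" by linarith
          then obtain \<rho> :: "'m \<Rightarrow> 'l" where "det (\<chi> i j. A t $ \<rho> i $ j) \<noteq> 0"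
            using rank_full_minor by blast
          then show False using h by blast
        qed
      qed
      then have "Rank A \<le> CARD('m) - 1" unfolding Rank_def by (rule Least_le)
      moreover have "0 < CARD('m)" by simp
      ultimately show False using assms(3) by linarith
    qed
    then show ?thesis by blast
  qed
  then obtain \<rho> :: "'m \<Rightarrow> 'l" where rho: "\<not> (AE t in circ. det (\<chi> i j. A t $ \<rho> i $ j) = 0)" by blast
  have "{S. indep_mod_Nev (\<lambda>k t. column k (\<Phi> t)) S} = {S. indep_mod_Nev (\<lambda>k t. column k (A t ** \<Phi> t)) S}"
    using indep_equiv[OF Aent rho] by blast
  then show ?thesis unfolding ind_Nev_def by simp
qed

end
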